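(* Let $\nu\in M_0(\mathbb D^* )$ and let $W$ be a M\"obius transformation of $\widehat{\mathbb C}$ such that $W\circ F_\nu$ is holomorphic on $\mathbb D$. If $\Phi=\log(W\circ F_\nu)'$ belongs to $B_0(\mathbb D)$, then $W\circ F_\nu$ maps $\mathbb D$ onto a bounded domain in $\mathbb C$.
   Context: $\mathbb D$ is the unit disk, $\widehat{\mathbb C}=\mathbb C\cup\{\infty\}$, $\mathbb D^*=\widehat{\mathbb C}\setminus\overline{\mathbb D}$. $M(\mathbb D^* )=\{\mu\in L^\infty(\mathbb D^* ):\|\mu\|_\infty<1\}$, and $M_0(\mathbb D^* )=\{\mu\in M(\mathbb D^* ):\lim_{t\to0}\operatorname{ess\,sup}_{|z|<1+t}|\mu(z)|=0\}$ (asymptotically conformal Beltrami coefficients). For $\mu\in M(\mathbb D^* )$, $F_\mu$ is the unique conformal homeomorphism of $\mathbb D$ onto a bounded domain in $\mathbb C$ with $F_\mu(0)=0$, $F_\mu'(0)=1$, extending to a quasiconformal self-homeomorphism of $\widehat{\mathbb C}$ with $F_\mu(\infty)=\infty$ and complex dilatation $\mu$ on $\mathbb D^*$. $B_0(\mathbb D)$ (little Bloch space) is the space of holomorphic $\Phi$ on $\mathbb D$ with $\sup_{z\in\mathbb D}(1-|z|^2)|\Phi'(z)|<\infty$ and $\lim_{t\to0}\sup_{|z|>1-t}(1-|z|^2)|\Phi'(z)|=0$ (functions differing by constants identified). *)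

theory Defs
  imports "HOL-Analysis.Analysis"
begin

text \<open>Unit disk D = ball 0 1; exterior D* = {z. 1 < cmod z} (the point at infinity is a null set).\<close>

definition beltrami_ext :: "(complex \<Rightarrow> complex) \<Rightarrow> bool" where
  "beltrami_ext \<mu> \<longleftrightarrow>
     \<mu> \<in> borel_measurable (restrict_space lebesgue {z. 1 < cmod z}) \<and>
     (\<exists>k<1. AE z in lebesgue. 1 < cmod z \<longrightarrow> cmod (\<mu> z) \<le> k)"

definition asympt_conformal :: "(complex \<Rightarrow> complex) \<Rightarrow> bool" where
  "asympt_conformal \<mu> \<longleftrightarrow> beltrami_ext \<mu> \<and>
     (\<forall>\<epsilon>>0. \<exists>t>0. AE z in lebesgue. 1 < cmod z \<and> cmod z < 1 + t \<longrightarrow> cmod (\<mu> z) \<le> \<epsilon>)"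

definition abs_cont_on :: "real \<Rightarrow> real \<Rightarrow> (real \<Rightarrow> complex) \<Rightarrow> bool" where
  "abs_cont_on a b f \<longleftrightarrow>
     (\<forall>\<epsilon>>0. \<exists>\<delta>>0. \<forall>(n::nat) (I :: nat \<Rightarrow> real \<times> real).
        (\<forall>k<n. a \<le> fst (I k) \<and> fst (I k) \<le> snd (I k) \<and> snd (I k) \<le> b) \<and>
        (\<forall>j<n. \<forall>k<n. j \<noteq> k \<longrightarrow> snd (I j) \<le> fst (I k) \<or> snd (I k) \<le> fst (I j)) \<and>
        (\<Sum>k<n. snd (I k) - fst (I k)) < \<delta>
        \<longrightarrow> (\<Sum>k<n. cmod (f (snd (I k)) - f (fst (I k)))) < \<epsilon>)"

definition ACL :: "(complex \<Rightarrow> complex) \<Rightarrow> bool" where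
  "ACL F \<longleftrightarrow>
     (AE y in lborel. \<forall>a b. abs_cont_on a b (\<lambda>x. F (Complex x y))) \<and>
     (AE x in lborel. \<forall>a b. abs_cont_on a b (\<lambda>y. F (Complex x y)))"

text \<open>F is a quasiconformal self-homeomorphism of the plane (hence of the sphere, fixing
  infinity) whose complex dilatation equals mu a.e. on D*: analytic definition
  (homeomorphism, ACL, Beltrami equation a.e. with Wirtinger derivatives
  F_zbar = (L 1 + i L i)/2, F_z = (L 1 - i L i)/2 of the real derivative L).\<close>
definition qc_dilatation_ext :: "(complex \<Rightarrow> complex) \<Rightarrow> (complex \<Rightarrow> complex) \<Rightarrow> bool" where
  "qc_dilatation_ext \<mu> F \<longleftrightarrow>
     (\<exists>G. homeomorphism UNIV UNIV F G) \<and> ACL F \<and>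
     (AE z in lebesgue. 1 < cmod z \<longrightarrow>
        (\<exists>L. (F has_derivative L) (at z) \<and>
             (L 1 + \<i> * L \<i>) / 2 = \<mu> z * ((L 1 - \<i> * L \<i>) / 2)))"

definition is_F :: "(complex \<Rightarrow> complex) \<Rightarrow> (complex \<Rightarrow> complex) \<Rightarrow> bool" where
  "is_F \<mu> F \<longleftrightarrow>
     F holomorphic_on ball 0 1 \<and> inj_on F (ball 0 1) \<and> bounded (F ` ball 0 1) \<and>
     F 0 = 0 \<and> deriv F 0 = 1 \<and> qc_dilatation_ext \<mu> F"

text \<open>Moebius transformation (restricted to the finite plane).\<close>
definition moebius :: "complex \<Rightarrow> complex \<Rightarrow> complex \<Rightarrow> complex \<Rightarrow> complex \<Rightarrow> complex" where
  "moebius a b c d z = (a * z + b) / (c * z + d)"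

definition little_bloch :: "(complex \<Rightarrow> complex) \<Rightarrow> bool" where
  "little_bloch \<Phi> \<longleftrightarrow> \<Phi> holomorphic_on ball 0 1 \<and>
     (\<exists>C. \<forall>z\<in>ball 0 1. (1 - (cmod z)\<^sup>2) * cmod (deriv \<Phi> z) \<le> C) \<and>
     (\<forall>\<epsilon>>0. \<exists>t>0. \<forall>z. 1 - t < cmod z \<and> cmod z < 1 \<longrightarrow>
        (1 - (cmod z)\<^sup>2) * cmod (deriv \<Phi> z) \<le> \<epsilon>)"

end

theory Submission
  imports Defs
begin

lemma ray_bound:
  fixes g g' :: "complex \<Rightarrow> complex" and \<phi> \<phi>' :: "real \<Rightarrow> real"
  assumes "\<rho> < r"
    and dg: "\<And>s. \<rho> \<le> s \<Longrightarrow> s \<le> r \<Longrightarrow> (g has_field_derivative g' (of_real s * u)) (at (of_real s * u))"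
    and dphi: "\<And>s. \<rho> \<le> s \<Longrightarrow> s \<le> r \<Longrightarrow> (\<phi> has_real_derivative \<phi>' s) (at s)"
    and bnd: "\<And>s. \<rho> < s \<Longrightarrow> s < r \<Longrightarrow> norm (u * g' (of_real s * u)) \<le> \<phi>' s"
  shows "norm (g (of_real r * u) - g (of_real \<rho> * u)) \<le> \<phi> r - \<phi> \<rho>"
proof -
  have D: "((\<lambda>s. g (of_real s * u)) has_vector_derivative (u * g' (of_real s * u))) (at s)"
    if "\<rho> \<le> s" "s \<le> r" for s
  proof -
    have "((\<lambda>x. x * u) has_field_derivative u) (at (of_real s))"
      by (auto intro!: derivative_eq_intros)
    then have "((\<lambda>x. of_real x * u) has_vector_derivative u) (at s)"
      by (rule has_vector_derivative_real_field)
    from field_vector_diff_chain_at[OF this dg[OF that]] show ?thesis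
      by (simp add: o_def)
  qed
  have P: "(\<phi> has_vector_derivative \<phi>' s) (at s)" if "\<rho> \<le> s" "s \<le> r" for s
    using dphi[OF that] by (simp add: has_real_derivative_iff_has_vector_derivative)
  show ?thesis
  proof (rule differentiable_bound_general[OF assms(1), where f'="\<lambda>s. u * g' (of_real s * u)" and \<phi>'=\<phi>'])
    show "continuous_on {\<rho>..r} (\<lambda>s. g (of_real s * u))"
    proof (intro continuous_at_imp_continuous_on ballI)
      fix x assume "x \<in> {\<rho>..r}"
      then show "isCont (\<lambda>s. g (of_real s * u)) x"
        using D[of x] has_vector_derivative_continuous by auto
    qed
    show "continuous_on {\<rho>..r} \<phi>"
      by (intro continuous_at_imp_continuous_on ballI) (meson DERIV_isCont atLeastAtMost_iff dphi)
  qed (use D P bnd in force)+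
qed

lemma exp_ln_half: "0 < (x::real) \<Longrightarrow> exp (ln x / 2) = sqrt x"
  by (simp add: powr_half_sqrt[symmetric] powr_def)

lemma main_bound:
  fixes f \<Phi> :: "complex \<Rightarrow> complex"
  assumes hf: "f holomorphic_on ball 0 1" and hP: "\<Phi> holomorphic_on ball 0 1"
    and ex: "\<forall>z\<in>ball 0 1. exp (\<Phi> z) = deriv f z"
    and lb: "little_bloch \<Phi>"
  shows "bounded (f ` ball 0 1)"
proof -
  obtain t where t: "t > 0" and tb: "\<And>z. 1 - t < cmod z \<Longrightarrow> cmod z < 1 \<Longrightarrow>
      (1 - (cmod z)\<^sup>2) * cmod (deriv \<Phi> z) \<le> 1/2"
    using lb unfolding little_bloch_def by (meson half_gt_zero zero_less_one)
  define \<rho> where "\<rho> = max (1/2) (1 - t/2)"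
  have \<rho>: "0 < \<rho>" "\<rho> < 1" "1 - t < \<rho>" using t by (auto simp: \<rho>_def)
  have sub: "cball 0 \<rho> \<subseteq> ball (0::complex) 1" using \<rho> by auto
  have cf: "continuous_on (cball 0 \<rho>) f"
    using hf sub holomorphic_on_imp_continuous_on continuous_on_subset by blast
  have cP: "continuous_on (cball 0 \<rho>) \<Phi>"
    using hP sub holomorphic_on_imp_continuous_on continuous_on_subset by blast
  obtain A where A: "\<And>z. z \<in> cball 0 \<rho> \<Longrightarrow> norm (f z) \<le> A"
    using compact_imp_bounded[OF compact_continuous_image[OF cf compact_cball]]
    unfolding bounded_iff by blast
  obtain B where B: "\<And>z. z \<in> cball 0 \<rho> \<Longrightarrow> norm (\<Phi> z) \<le> B"
    using compact_imp_bounded[OF compact_continuous_image[OF cP compact_cball]]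
    unfolding bounded_iff by blast
  define K where "K = exp B * sqrt (1 - \<rho>)"
  have K0: "K \<ge> 0" using \<rho> by (simp add: K_def)
  have df: "(f has_field_derivative deriv f z) (at z)" if "z \<in> ball 0 1" for z
    using hf that by (meson holomorphic_derivI open_ball)
  have dP: "(\<Phi> has_field_derivative deriv \<Phi> z) (at z)" if "z \<in> ball 0 1" for z
    using hP that by (meson holomorphic_derivI open_ball)
  have inb: "of_real s * u \<in> ball (0::complex) 1" if "norm u = 1" "0 \<le> s" "s < 1" for s u
    using that by (simp add: norm_mult)
  have far: "norm (f z) \<le> A + 2 * K" if z: "z \<in> ball 0 1" "\<rho> < norm z" for z
  proof -
    define r where "r = norm z"
    define u where "u = z / of_real r"
    have r: "\<rho> < r" "r < 1" using z by (auto simp: r_def)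
    have "z \<noteq> 0" using r \<rho> by (auto simp: r_def)
    have u: "norm u = 1" using \<open>z \<noteq> 0\<close> by (simp add: u_def r_def norm_divide)
    then have zru: "z = of_real r * u" by (simp add: u_def r_def)
    have \<rho>u: "of_real \<rho> * u \<in> cball 0 \<rho>" using u \<rho> by (simp add: norm_mult)
    have Pb: "norm (\<Phi> (of_real s * u)) \<le> B + (ln (1 - \<rho>) / 2 - ln (1 - s) / 2)"
      if s: "\<rho> \<le> s" "s < 1" for s
    proof (cases "s = \<rho>")
      case True then show ?thesis using B[OF \<rho>u] by simp
    next
      case False
      then have s': "\<rho> < s" using s by simp
      have "norm (\<Phi> (of_real s * u) - \<Phi> (of_real \<rho> * u))
          \<le> (- ln (1 - s) / 2) - (- ln (1 - \<rho>) / 2)"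
      proof (rule ray_bound[where g' = "deriv \<Phi>" and \<phi>' = "\<lambda>s. 1 / (2 * (1 - s))", OF s'])
        fix x assume x: "\<rho> \<le> x" "x \<le> s"
        show "(\<Phi> has_field_derivative deriv \<Phi> (of_real x * u)) (at (of_real x * u))"
          using dP inb u x s \<rho> by simp
        show "((\<lambda>s. - ln (1 - s) / 2) has_real_derivative 1 / (2 * (1 - x))) (at x)"
          using x s by (auto intro!: derivative_eq_intros simp: field_simps)
      next
        fix x assume x: "\<rho> < x" "x < s"
        have nx: "cmod (of_real x * u) = x" using u x \<rho> by (simp add: norm_mult)
        have h: "(1 - x\<^sup>2) * cmod (deriv \<Phi> (of_real x * u)) \<le> 1/2"
          using tb[of "of_real x * u"] nx x s \<rho> by simp
        have "1 - x \<le> 1 - x\<^sup>2" using x s \<rho> by (simp add: power2_eq_square mult_left_le_one_le)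
        then have "(1 - x) * cmod (deriv \<Phi> (of_real x * u)) \<le> 1/2"
          using h by (meson mult_right_mono norm_ge_zero order_trans)
        then show "cmod (u * deriv \<Phi> (of_real x * u)) \<le> 1 / (2 * (1 - x))"
          using x s u by (simp add: norm_mult field_simps)
      qed
      then show ?thesis using B[OF \<rho>u] norm_triangle_sub[of "\<Phi> (of_real s * u)" "\<Phi> (of_real \<rho> * u)"]
        by simp
    qed
    have fb: "norm (deriv f (of_real s * u)) \<le> K / sqrt (1 - s)" if s: "\<rho> \<le> s" "s < 1" for s
    proof -
      have "norm (deriv f (of_real s * u)) = exp (Re (\<Phi> (of_real s * u)))"
      proof -
        have "of_real s * u \<in> ball 0 1" using inb[OF u _ s(2)] s \<rho> by simp
        then have "deriv f (of_real s * u) = exp (\<Phi> (of_real s * u))" using ex by simp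
        then show ?thesis by (simp add: norm_exp_eq_Re)
      qed
      also have "\<dots> \<le> exp (B + (ln (1 - \<rho>) / 2 - ln (1 - s) / 2))"
        using Pb[OF s] complex_Re_le_cmod[of "\<Phi> (of_real s * u)"] by simp
      also have "\<dots> = exp B * exp (ln (1 - \<rho>) / 2) / exp (ln (1 - s) / 2)"
        by (simp add: exp_add exp_diff)
      also have "\<dots> = K / sqrt (1 - s)"
        using s \<rho> by (simp add: exp_ln_half K_def)
      finally show ?thesis .
    qed
    have "norm (f (of_real r * u) - f (of_real \<rho> * u)) \<le> (- 2 * K * sqrt (1 - r)) - (- 2 * K * sqrt (1 - \<rho>))"
    proof (rule ray_bound[where g' = "deriv f" and \<phi>' = "\<lambda>s. K / sqrt (1 - s)", OF r(1)])
      fix x assume x: "\<rho> \<le> x" "x \<le> r"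
      show "(f has_field_derivative deriv f (of_real x * u)) (at (of_real x * u))"
        using df inb u x r \<rho> by simp
      show "((\<lambda>s. - 2 * K * sqrt (1 - s)) has_real_derivative K / sqrt (1 - x)) (at x)"
        using x r by (auto intro!: derivative_eq_intros simp: field_simps)
    next
      fix x assume x: "\<rho> < x" "x < r"
      then show "cmod (u * deriv f (of_real x * u)) \<le> K / sqrt (1 - x)"
        using fb[of x] r u by (simp add: norm_mult)
    qed
    also have "\<dots> \<le> 2 * K"
    proof -
      have "sqrt (1 - \<rho>) \<le> 1" using \<rho> by simp
      then have "2 * K * sqrt (1 - \<rho>) \<le> 2 * K" using K0 by (simp add: mult_left_le)
      moreover have "0 \<le> 2 * K * sqrt (1 - r)" using K0 r by simp
      ultimately show ?thesis by linarith
    qed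
    finally show ?thesis
      using A[OF \<rho>u] norm_triangle_sub[of "f (of_real r * u)" "f (of_real \<rho> * u)"] zru by simp
  qed
  have "\<forall>w\<in>f ` ball 0 1. norm w \<le> max A (A + 2 * K)"
  proof
    fix w assume "w \<in> f ` ball 0 1"
    then obtain z where z: "z \<in> ball 0 1" "w = f z" by auto
    show "norm w \<le> max A (A + 2 * K)"
    proof (cases "norm z \<le> \<rho>")
      case True then show ?thesis using A[of z] z by simp
    next
      case False then show ?thesis using far[OF z(1)] z by simp
    qed
  qed
  then show ?thesis unfolding bounded_iff by blast
qed


theorem lemma3p3:
  fixes \<nu> F \<Phi> :: "complex \<Rightarrow> complex" and a b c d :: complex
  assumes "asympt_conformal \<nu>"
    and "is_F \<nu> F"
    and "a * d - b * c \<noteq> 0"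
    and "(\<lambda>z. moebius a b c d (F z)) holomorphic_on ball 0 1"
    and "\<Phi> holomorphic_on ball 0 1"
    and "\<forall>z\<in>ball 0 1. exp (\<Phi> z) = deriv (\<lambda>w. moebius a b c d (F w)) z"
    and "little_bloch \<Phi>"
  shows "bounded ((\<lambda>z. moebius a b c d (F z)) ` ball 0 1)"
  using main_bound[OF assms(4) assms(5) assms(6) assms(7)] .

end
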